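(* Let $x_0>0$ and let $u:[x_0,b)\to(0,\infty)$ be a solution of $\frac{u''}{1+(u')^2}=\frac{xu'}{2}-\frac u2+\frac{n-1}{u}$ with $u(x_0)<\sqrt{2(n-1)}$ and $u'(x_0)=0$. Then $u$ is strictly convex on $[x_0,b)$.
   Context: $n\ge2$ is a fixed integer. *)

theory Defs
  imports "HOL-Analysis.Analysis" "HOL-Library.Extended_Real"
begin

definition strict_convex_on_real :: "real set \<Rightarrow> (real \<Rightarrow> real) \<Rightarrow> bool" where
  "strict_convex_on_real S f \<longleftrightarrow> convex S \<and>
     (\<forall>x\<in>S. \<forall>y\<in>S. x \<noteq> y \<longrightarrow> (\<forall>t. 0 < t \<and> t < 1 \<longrightarrow>
        f ((1 - t) * x + t * y) < (1 - t) * f x + t * f y))"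

end

theory Submission
  imports Defs
begin

lemma mvtD:
  fixes f g :: "real \<Rightarrow> real"
  assumes "a < c" "\<And>x. x \<in> S \<Longrightarrow> (f has_real_derivative g x) (at x within S)" "{a..c} \<subseteq> S"
  shows "\<exists>\<xi>. a < \<xi> \<and> \<xi> < c \<and> f c - f a = g \<xi> * (c - a)"
proof -
  have "\<exists>x\<in>{a<..<c}. f c - f a = (\<lambda>h. g x * h) (c - a)"
  proof (rule mvt_simple[OF assms(1)])
    fix x assume "a \<le> x" "x \<le> c"
    then have "x \<in> S" using assms(3) by auto
    then have "(f has_real_derivative g x) (at x within {a..c})"
      using assms(2) has_field_derivative_subset assms(3) by blast
    then show "(f has_derivative (\<lambda>h. g x * h)) (at x within {a..c})"
      by (simp add: has_field_derivative_def mult_commute_abs)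
  qed
  then show ?thesis by auto
qed

lemma cont_left_nonneg:
  fixes f :: "real \<Rightarrow> real"
  assumes "continuous (at x within S) f" "a < x" "{a..x} \<subseteq> S"
    "\<And>t. a \<le> t \<Longrightarrow> t < x \<Longrightarrow> f t > 0"
  shows "f x \<ge> 0"
proof (rule ccontr)
  assume "\<not> f x \<ge> 0"
  then have "f x < 0" by simp
  have "(f \<longlongrightarrow> f x) (at x within S)" using assms(1) by (simp add: continuous_within)
  then have "eventually (\<lambda>y. f y < 0) (at x within S)"
    using \<open>f x < 0\<close> by (rule order_tendstoD)
  then obtain d where d: "d > 0" "\<And>y. y \<in> S \<Longrightarrow> y \<noteq> x \<Longrightarrow> dist y x < d \<Longrightarrow> f y < 0"
    unfolding eventually_at by blast
  define t where "t = max a (x - d/2)"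
  have "t \<in> S" using assms(2,3) d(1) by (auto simp: t_def)
  moreover have "t \<noteq> x" "dist t x < d" using assms(2) d(1) by (auto simp: t_def dist_real_def)
  ultimately have "f t < 0" using d by blast
  moreover have "f t > 0" using assms(2,4) d(1) by (auto simp: t_def)
  ultimately show False by simp
qed

lemma cont_pos_nbhd:
  fixes f :: "real \<Rightarrow> real"
  assumes "continuous (at x within S) f" "f x > 0"
  shows "\<exists>d>0. \<forall>y\<in>S. dist y x < d \<longrightarrow> f y > 0"
proof -
  have "(f \<longlongrightarrow> f x) (at x within S)" using assms(1) by (simp add: continuous_within)
  then have "eventually (\<lambda>y. f y > 0) (at x within S)"
    using assms(2) by (rule order_tendstoD)
  then obtain d where d: "d > 0" "\<And>y. y \<in> S \<Longrightarrow> y \<noteq> x \<Longrightarrow> dist y x < d \<Longrightarrow> f y > 0"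
    unfolding eventually_at by blast
  then show ?thesis using assms(2) by metis
qed

lemma key_identity:
  fixes x p U m w g ds dg :: real
  assumes "U > 0" and s_def: "w = x*p/2 - U/2 + m/U"
  and g_def: "g = (1+p^2) * w"
  and DS_def: "ds = x*g/2 - m*p/U^2"
  and DG_def: "dg = 2*p*g * w + (1+p^2)*ds"
  shows "U*g + x*p*g + x*U*dg - ((p-(p+x*g))*p + (U-x*p)*g)
       = (p*(2*g/(1+p^2)) + (1+p^2)*x/2) * (x*U*g - (U-x*p)*p) + 2*x*p*g + p^2*(2*g/(1+p^2))*(U-x*p)"
proof -
  have P: "1 + p^2 > 0" by (simp add: add_pos_nonneg)
  have h: "2*g/(1+p^2) = 2*w" using P unfolding g_def by (simp add: field_simps)
  have "U*g + x*p*g + x*U*dg - ((p-(p+x*g))*p + (U-x*p)*g)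
       = (p*(2*w) + (1+p^2)*x/2) * (x*U*g - (U-x*p)*p) + 2*x*p*g + p^2*(2*w)*(U-x*p)"
    unfolding DG_def DS_def g_def using assms(1) unfolding s_def
    by (simp add: field_simps power2_eq_square)
  then show ?thesis by (simp only: h)
qed

theorem lemma2p10:
  fixes n :: nat and x0 :: real and b :: ereal
    and u u' u'' :: "real \<Rightarrow> real"
  assumes n: "n \<ge> 2"
    and x0: "x0 > 0"
    and b: "ereal x0 < b"
    and pos: "\<And>x. x0 \<le> x \<Longrightarrow> ereal x < b \<Longrightarrow> u x > 0"
    and d1: "\<And>x. x0 \<le> x \<Longrightarrow> ereal x < b \<Longrightarrow>
               (u has_real_derivative u' x) (at x within {y. x0 \<le> y \<and> ereal y < b})"
    and d2: "\<And>x. x0 \<le> x \<Longrightarrow> ereal x < b \<Longrightarrow>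
               (u' has_real_derivative u'' x) (at x within {y. x0 \<le> y \<and> ereal y < b})"
    and ode: "\<And>x. x0 \<le> x \<Longrightarrow> ereal x < b \<Longrightarrow>
               u'' x / (1 + (u' x)\<^sup>2) = x * u' x / 2 - u x / 2 + (real n - 1) / u x"
    and init: "u x0 < sqrt (2 * (real n - 1))"
    and init': "u' x0 = 0"
  shows "strict_convex_on_real {x. x0 \<le> x \<and> ereal x < b} u"
proof -
  define D where "D = {y. x0 \<le> y \<and> ereal y < b}"
  define m where "m = real n - 1"
  have m: "m \<ge> 1" using n by (simp add: m_def)
  define S where "S = (\<lambda>x. x * u' x / 2 - u x / 2 + m / u x)"
  define G where "G = (\<lambda>x. (1 + (u' x)^2) * S x)"
  define Th where "Th = (\<lambda>x. x * u x * G x - (u x - x * u' x) * u' x)"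
  have inD: "x \<in> D \<longleftrightarrow> x0 \<le> x \<and> ereal x < b" for x by (simp add: D_def)
  have Dint: "t \<in> D" if "a \<in> D" "c \<in> D" "a \<le> t" "t \<le> c" for a c t
  proof -
    have "ereal t \<le> ereal c" using that by simp
    moreover have "ereal c < b" using that(2) by (simp add: D_def)
    ultimately have "ereal t < b" by (rule le_less_trans)
    then show ?thesis using that unfolding D_def by auto
  qed
  have x0D: "x0 \<in> D" using b by (simp add: D_def)
  have upos: "u x > 0" if "x \<in> D" for x using pos that by (simp add: D_def)
  have P1: "1 + (u' x)^2 > 0" for x by (simp add: add_pos_nonneg)
  have uG: "u'' x = G x" if "x \<in> D" for x
  proof -
    have "u'' x / (1 + (u' x)\<^sup>2) = S x" using ode that by (simp add: D_def S_def m_def)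
    then show ?thesis using P1[of x] by (simp add: G_def field_simps)
  qed
  have D1: "(u has_real_derivative u' x) (at x within D)" if "x \<in> D" for x
    using d1 that by (simp add: D_def)
  have D2: "(u' has_real_derivative G x) (at x within D)" if "x \<in> D" for x
    using d2[of x] that uG[OF that] by (simp add: D_def)
  have DS: "(S has_real_derivative (x * G x / 2 - m * u' x / (u x)^2)) (at x within D)"
    if "x \<in> D" for x
    unfolding S_def using D1[OF that] D2[OF that] upos[OF that]
    by (auto intro!: derivative_eq_intros simp: field_simps power2_eq_square)
  have DG: "(G has_real_derivative (2 * u' x * G x * S x + (1 + (u' x)^2) * (x * G x / 2 - m * u' x / (u x)^2))) (at x within D)"
    if "x \<in> D" for x
    unfolding G_def using D1[OF that] D2[OF that] DS[OF that] upos[OF that]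
    by (auto intro!: derivative_eq_intros simp: field_simps power2_eq_square G_def)
  have DTh: "(Th has_real_derivative (u x * G x + x * u' x * G x
      + x * u x * (2 * u' x * G x * S x + (1 + (u' x)^2) * (x * G x / 2 - m * u' x / (u x)^2))
      - ((u' x - (u' x + x * G x)) * u' x + (u x - x * u' x) * G x))) (at x within D)"
    if "x \<in> D" for x
    unfolding Th_def using D1[OF that] D2[OF that] DG[OF that] upos[OF that]
    by (auto intro!: derivative_eq_intros simp: field_simps power2_eq_square)
  have cG: "continuous (at x within D) G" if "x \<in> D" for x using DG[OF that] by (rule DERIV_continuous)
  have cTh: "continuous (at x within D) Th" if "x \<in> D" for x using DTh[OF that] by (rule DERIV_continuous)
  have u0: "u x0 > 0" using upos x0D by blast
  have "(u x0)^2 < (sqrt (2 * m))^2"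
    using init u0 by (simp add: m_def power_strict_mono)
  then have u0sq: "(u x0)^2 < 2 * m" using m by simp
  have G0: "G x0 > 0"
  proof -
    have "S x0 = (2*m - (u x0)^2) / (2 * u x0)" using u0 init' by (simp add: S_def field_simps power2_eq_square)
    also have "\<dots> > 0" using u0 u0sq by simp
    finally show ?thesis by (simp add: G_def init')
  qed
  have Th0: "Th x0 > 0" using G0 x0 u0 by (simp add: Th_def init')
  have Gpos: "\<forall>x\<in>D. G x > 0"
  proof (rule ccontr)
    assume "\<not> (\<forall>x\<in>D. G x > 0)"
    define B where "B = {t\<in>D. G t \<le> 0 \<or> Th t \<le> 0}"
    have Bne: "B \<noteq> {}" using \<open>\<not> (\<forall>x\<in>D. G x > 0)\<close> by (auto simp: B_def)
    have Bbdd: "bdd_below B" unfolding B_def D_def by (rule bdd_belowI[of _ x0]) auto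
    define x1 where "x1 = Inf B"
    have lowB: "x1 \<le> t" if "t \<in> B" for t using Bbdd that by (simp add: x1_def cInf_lower)
    have x0x1: "x0 \<le> x1" unfolding x1_def using Bne by (rule cInf_greatest) (auto simp: B_def D_def)
    obtain t1 where t1: "t1 \<in> B" using Bne by blast
    have x1D: "x1 \<in> D" using Dint[OF x0D _ x0x1 lowB[OF t1]] t1 by (auto simp: B_def)
    have below: "G t > 0 \<and> Th t > 0" if "x0 \<le> t" "t < x1" for t
    proof -
      have "t \<in> D" using Dint[OF x0D x1D that(1)] that(2) by simp
      moreover have "t \<notin> B" using lowB that(2) by force
      ultimately show ?thesis by (auto simp: B_def)
    qed
    have inB: "G x1 \<le> 0 \<or> Th x1 \<le> 0"
    proof (rule ccontr)
      assume "\<not> (G x1 \<le> 0 \<or> Th x1 \<le> 0)"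
      then have gp: "G x1 > 0" "Th x1 > 0" by auto
      obtain d1 where d1: "d1 > 0" "\<forall>y\<in>D. dist y x1 < d1 \<longrightarrow> G y > 0"
        using cont_pos_nbhd[OF cG[OF x1D] gp(1)] by blast
      obtain d2 where d2: "d2 > 0" "\<forall>y\<in>D. dist y x1 < d2 \<longrightarrow> Th y > 0"
        using cont_pos_nbhd[OF cTh[OF x1D] gp(2)] by blast
      have "x1 + min d1 d2 \<le> t" if "t \<in> B" for t
      proof (rule ccontr)
        assume "\<not> x1 + min d1 d2 \<le> t"
        moreover have "x1 \<le> t" using lowB that by blast
        ultimately have "dist t x1 < d1" "dist t x1 < d2" by (auto simp: dist_real_def)
        then show False using d1 d2 that by (auto simp: B_def)
      qed
      then have "x1 + min d1 d2 \<le> x1" unfolding x1_def using Bne by (intro cInf_greatest) auto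
      then show False using d1 d2 by simp
    qed
    have x0lt: "x0 < x1"
    proof (rule ccontr)
      assume "\<not> x0 < x1"
      then have "x1 = x0" using x0x1 by simp
      then show False using inB G0 Th0 by auto
    qed
    have sub: "{x0..x1} \<subseteq> D" using Dint[OF x0D x1D] by auto
    have Gn: "G x1 \<ge> 0" using cont_left_nonneg[OF cG[OF x1D] x0lt sub] below by blast
    have Thn: "Th x1 \<ge> 0" using cont_left_nonneg[OF cTh[OF x1D] x0lt sub] below by blast
    obtain \<xi> where xi: "x0 < \<xi>" "\<xi> < x1" "u' x1 - u' x0 = G \<xi> * (x1 - x0)"
      using mvtD[OF x0lt D2 sub] by blast
    have p1: "u' x1 > 0" using xi below[of \<xi>] x0lt init' by simp
    have U1: "u x1 > 0" using upos x1D by blast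
    show False
    proof (cases "G x1 \<le> 0")
      case True
      then have "G x1 = 0" using Gn by simp
      then have "S x1 = 0" using P1[of x1] by (simp add: G_def)
      then have "u x1 - x1 * u' x1 = 2 * m / u x1" using U1 by (simp add: S_def field_simps)
      then have "Th x1 = - (2 * m / u x1) * u' x1" using \<open>G x1 = 0\<close> by (simp add: Th_def)
      moreover have "2 * m / u x1 * u' x1 > 0" using m U1 p1 by simp
      ultimately show False using Thn by simp
    next
      case False
      then have Gp: "G x1 > 0" by simp
      then have Th1: "Th x1 = 0" using inB Thn by simp
      show False
      proof (cases "u x1 - x1 * u' x1 < 0")
        case True
        have "x1 * u x1 * G x1 > 0" using x0 x0lt U1 Gp by simp
        moreover have "(u x1 - x1 * u' x1) * u' x1 < 0" using True p1 by (simp add: mult_neg_pos)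
        ultimately have "Th x1 > 0" by (simp add: Th_def)
        then show False using Th1 by simp
      next
        case False
        define E where "E = u x1 * G x1 + x1 * u' x1 * G x1
          + x1 * u x1 * (2 * u' x1 * G x1 * S x1 + (1 + (u' x1)^2) * (x1 * G x1 / 2 - m * u' x1 / (u x1)^2))
          - ((u' x1 - (u' x1 + x1 * G x1)) * u' x1 + (u x1 - x1 * u' x1) * G x1)"
        have "E = (u' x1*(2*G x1/(1+(u' x1)^2)) + (1+(u' x1)^2)*x1/2) * Th x1 + 2*x1*u' x1*G x1
             + (u' x1)^2*(2*G x1/(1+(u' x1)^2))*(u x1-x1*u' x1)"
          unfolding E_def Th_def
          by (rule key_identity[OF U1, of _ x1 "u' x1" m]) (simp_all add: S_def G_def)
        also have "\<dots> > 0"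
        proof -
          have "2*x1*u' x1*G x1 > 0" using x0 x0lt p1 Gp by simp
          moreover have "(u' x1)^2*(2*G x1/(1+(u' x1)^2))*(u x1-x1*u' x1) \<ge> 0"
            using Gp P1[of x1] False by simp
          ultimately show ?thesis using Th1 by (simp only: mult_zero_right add_0_right)
        qed
        finally have Epos: "E > 0" .
        obtain d where d: "d > 0" "\<forall>h>0. x1 - h \<in> D \<longrightarrow> h < d \<longrightarrow> Th (x1 - h) < Th x1"
          using has_real_derivative_pos_inc_left[OF DTh[OF x1D, folded E_def] Epos] by blast
        define h where "h = min d (x1 - x0) / 2"
        have h: "h > 0" "h < d" "x0 \<le> x1 - h" "x1 - h < x1" using d(1) x0lt by (auto simp: h_def min_def field_simps)
        have "x1 - h \<in> D" using Dint[OF x0D x1D h(3)] h by simp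
        then have "Th (x1 - h) < 0" using d(2) h Th1 by auto
        moreover have "Th (x1 - h) > 0" using below h by blast
        ultimately show False by simp
      qed
    qed
  qed
  have u'mono: "u' x < u' y" if xyD: "x \<in> D" "y \<in> D" "x < y" for x y
  proof -
    have "{x..y} \<subseteq> D" using Dint[OF xyD(1,2)] by auto
    then obtain \<xi> where "x < \<xi>" "\<xi> < y" "u' y - u' x = G \<xi> * (y - x)"
      using mvtD[OF xyD(3) D2] by blast
    moreover have "\<xi> \<in> D" using Dint[OF xyD(1,2)] \<open>x < \<xi>\<close> \<open>\<xi> < y\<close> by simp
    ultimately have "G \<xi> * (y - x) > 0" "u' y - u' x = G \<xi> * (y - x)" using Gpos xyD(3) by simp_all
    then show ?thesis by linarith
  qed
  have conv: "u ((1 - t) * x + t * y) < (1 - t) * u x + t * u y"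
    if xyt: "x \<in> D" "y \<in> D" "x < y" "0 < t" "t < 1" for x y t
  proof -
    define z where "z = (1 - t) * x + t * y"
    have zx: "z - x = t * (y - x)" "y - z = (1 - t) * (y - x)" by (simp_all add: z_def algebra_simps)
    have pz: "t * (y - x) > 0" "(1 - t) * (y - x) > 0" using xyt by simp_all
    have xz: "x < z" "z < y" using pz unfolding z_def by (simp_all add: algebra_simps)
    have zD: "z \<in> D" using Dint[OF xyt(1,2)] xz by simp
    obtain a where a: "x < a" "a < z" "u z - u x = u' a * (z - x)"
      using mvtD[of x z D u u', OF xz(1) D1] Dint[OF xyt(1) zD] by fastforce
    obtain c where c: "z < c" "c < y" "u y - u z = u' c * (y - z)"
      using mvtD[of z y D u u', OF xz(2) D1] Dint[OF zD xyt(2)] by fastforce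
    have aD: "a \<in> D" "c \<in> D" using Dint[OF xyt(1,2)] a c xz by auto
    have "u' a < u' c" using u'mono[OF aD] a c by simp
    moreover have "t * (1 - t) * (y - x) > 0" using xyt by simp
    ultimately have ineq: "u' a * (t * (1 - t) * (y - x)) < u' c * (t * (1 - t) * (y - x))"
      by (simp add: mult_strict_right_mono)
    have uz: "u z = u x + u' a * (t * (y - x))" using a(3) zx by simp
    have uy: "u y = u x + u' a * (t * (y - x)) + u' c * ((1 - t) * (y - x))" using c(3) zx uz by simp
    have "(1 - t) * u x + t * u y - u z = u' c * (t * (1 - t) * (y - x)) - u' a * (t * (1 - t) * (y - x))"
      unfolding uz uy by (simp add: algebra_simps)
    then show ?thesis using ineq by (simp add: z_def)
  qed
  have cvx: "convex D"
    unfolding is_interval_convex_1[symmetric] is_interval_1 using Dint by blast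
  show ?thesis
    unfolding strict_convex_on_real_def D_def[symmetric]
  proof (intro conjI cvx ballI impI allI)
    fix x y t :: real assume xy: "x \<in> D" "y \<in> D" "x \<noteq> y" and t: "0 < t \<and> t < 1"
    show "u ((1 - t) * x + t * y) < (1 - t) * u x + t * u y"
    proof (cases "x < y")
      case True then show ?thesis using conv xy t by blast
    next
      case False
      then have "y < x" using xy(3) by simp
      then have "u ((1 - (1 - t)) * y + (1 - t) * x) < (1 - (1 - t)) * u y + (1 - t) * u x"
        using conv[of y x "1 - t"] xy t by simp
      then show ?thesis by (simp add: algebra_simps)
    qed
  qed
qed

end
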